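(* Let $X$ be a reflexive Banach space, $S\subseteq\partial B_1(0)$ a nonempty set, $\varphi:X\to\mathbb{R}$ locally Lipschitz continuous, and $\mu<\inf_S\varphi$ a real number. Suppose that (a) $\lim_{t\to\infty}\varphi(tu)=-\infty$ for all $u\in S$, and (b) $\langle v^*,v\rangle<0$ for all $v\in\varphi^{-1}(\mu)$ and all $v^*\in\partial\varphi(v)$. Then there exists a continuous mapping $\tau:S\to(1,\infty)$ such that for all $u\in S$ and all $t\ge1$: $\varphi(tu)>\mu$ if $t<\tau(u)$, $\varphi(tu)=\mu$ if $t=\tau(u)$, and $\varphi(tu)<\mu$ if $t>\tau(u)$.
   Context: $B_1(0)$ is the open unit ball of $X$ and $\partial B_1(0)$ the unit sphere; $\langle\cdot,\cdot\rangle$ is the duality pairing between $X^*$ and $X$. For a locally Lipschitz $\varphi:X\to\mathbb{R}$, the Clarke generalized directional derivative is $\varphi^\circ(u;v)=\limsup_{w\to u,\,t\to0^+}\frac{\varphi(w+tv)-\varphi(w)}{t}$ and the Clarke generalized subdifferential is $\partial\varphi(u)=\{u^*\in X^*:\langle u^*,v\rangle\le\varphi^\circ(u;v)\ \forall v\in X\}$. *)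

theory Defs
  imports "HOL-Analysis.Analysis"
begin

text \<open>The dual space X* is modelled as the bounded linear functionals 'a \<Rightarrow>L real;
  the duality pairing is application.\<close>

definition reflexive_space :: "'a::real_normed_vector itself \<Rightarrow> bool" where
  "reflexive_space _ \<longleftrightarrow>
     (\<forall>F :: ('a \<Rightarrow>\<^sub>L real) \<Rightarrow>\<^sub>L real. \<exists>x::'a. \<forall>f. blinfun_apply F f = blinfun_apply f x)"

definition locally_lipschitz :: "('a::metric_space \<Rightarrow> real) \<Rightarrow> bool" where
  "locally_lipschitz \<phi> \<longleftrightarrow>
     (\<forall>u. \<exists>r>0. \<exists>L. \<forall>x\<in>ball u r. \<forall>y\<in>ball u r. \<bar>\<phi> x - \<phi> y\<bar> \<le> L * dist x y)"

text \<open>Clarke generalized directional derivative, as a limsup over w \<rightarrow> u, t \<rightarrow> 0+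
  (valued in the extended reals; finite for locally Lipschitz functions).\<close>
definition clarke_dd :: "('a::real_normed_vector \<Rightarrow> real) \<Rightarrow> 'a \<Rightarrow> 'a \<Rightarrow> ereal" where
  "clarke_dd \<phi> u v =
     Limsup (at (u, 0) within (UNIV \<times> {0<..}))
       (\<lambda>(w, t). ereal ((\<phi> (w + t *\<^sub>R v) - \<phi> w) / t))"

definition clarke_subdiff :: "('a::real_normed_vector \<Rightarrow> real) \<Rightarrow> 'a \<Rightarrow> ('a \<Rightarrow>\<^sub>L real) set" where
  "clarke_subdiff \<phi> u = {x. \<forall>v. ereal (blinfun_apply x v) \<le> clarke_dd \<phi> u v}"

end

theory Submission imports Defs begin

definition hb_good :: "('a::real_vector \<Rightarrow> real) \<Rightarrow> ('a \<times> real) set \<Rightarrow> bool" where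
  "hb_good p G \<longleftrightarrow> (0,0) \<in> G \<and> (\<forall>x a y b. (x,a)\<in>G \<longrightarrow> (y,b)\<in>G \<longrightarrow> (x+y,a+b)\<in>G)
     \<and> (\<forall>x a c. (x,a)\<in>G \<longrightarrow> (c *\<^sub>R x, c*a)\<in>G) \<and> (\<forall>x a. (x,a)\<in>G \<longrightarrow> a \<le> p x)"

lemma hb_exists:
  fixes p :: "'a::real_vector \<Rightarrow> real"
  assumes sub: "\<And>x y. p (x + y) \<le> p x + p y"
    and hom: "\<And>c x. c \<ge> 0 \<Longrightarrow> p (c *\<^sub>R x) = c * p x"
  shows "\<exists>f. linear f \<and> (\<forall>x. f x \<le> p x) \<and> f v = p v"
proof -
  have p0: "p 0 = 0" using hom[of 0 0] by simp
  have pneg: "- p x \<le> p (- x)" for x using sub[of x "-x"] p0 by simp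
  define G0 where "G0 = range (\<lambda>t. (t *\<^sub>R v, t * p v))"
  define A where "A = {G. hb_good p G \<and> G0 \<subseteq> G}"
  have G0A: "G0 \<in> A"
    unfolding A_def hb_good_def G0_def
  proof (intro CollectI conjI allI impI subset_refl)
    show "(0, 0) \<in> range (\<lambda>t. (t *\<^sub>R v, t * p v))" by (auto intro!: image_eqI[where x=0])
  next
    fix x a y b assume "(x,a) \<in> range (\<lambda>t. (t *\<^sub>R v, t * p v))" "(y,b) \<in> range (\<lambda>t. (t *\<^sub>R v, t * p v))"
    then obtain s t where "x = s *\<^sub>R v" "a = s * p v" "y = t *\<^sub>R v" "b = t * p v" by auto
    then show "(x+y, a+b) \<in> range (\<lambda>t. (t *\<^sub>R v, t * p v))"
      by (auto intro!: image_eqI[where x="s+t"] simp: scaleR_add_left distrib_right)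
  next
    fix x a c assume "(x,a) \<in> range (\<lambda>t. (t *\<^sub>R v, t * p v))"
    then obtain s where "x = s *\<^sub>R v" "a = s * p v" by auto
    then show "(c *\<^sub>R x, c*a) \<in> range (\<lambda>t. (t *\<^sub>R v, t * p v))"
      by (auto intro!: image_eqI[where x="c * s"])
  next
    fix x a assume "(x,a) \<in> range (\<lambda>t. (t *\<^sub>R v, t * p v))"
    then obtain s where xs: "x = s *\<^sub>R v" "a = s * p v" by auto
    show "a \<le> p x"
    proof (cases "s \<ge> 0")
      case True then show ?thesis using xs hom by simp
    next
      case False
      have "p x = (-s) * p (- v)" using xs hom[of "-s" "-v"] False by simp
      moreover have "- p v \<le> p (-v)" by (rule pneg)
      ultimately show ?thesis using xs False mult_left_mono[of "- p v" "p (-v)" "-s"] by (simp add: algebra_simps)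
    qed
  qed
  have "\<exists>M\<in>A. \<forall>X\<in>A. M \<subseteq> X \<longrightarrow> X = M"
  proof (rule Zorn_Lemma2, intro ballI)
    fix C assume C: "C \<in> chains A"
    show "\<exists>U\<in>A. \<forall>X\<in>C. X \<subseteq> U"
    proof (cases "C = {}")
      case True then show ?thesis using G0A by blast
    next
      case False
      have CA: "C \<subseteq> A" and ch: "\<And>X Y. X \<in> C \<Longrightarrow> Y \<in> C \<Longrightarrow> X \<subseteq> Y \<or> Y \<subseteq> X"
        using C unfolding chains_def chain_subset_def by auto
      have "\<Union>C \<in> A" unfolding A_def hb_good_def
      proof (intro CollectI conjI allI impI)
        obtain X where X: "X \<in> C" using False by blast
        then show "(0,0) \<in> \<Union>C" using CA unfolding A_def hb_good_def by blast
        show "G0 \<subseteq> \<Union>C" using X CA unfolding A_def by blast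
      next
        fix x a y b assume "(x,a) \<in> \<Union>C" "(y,b) \<in> \<Union>C"
        then obtain X Y where XY: "X \<in> C" "Y \<in> C" "(x,a) \<in> X" "(y,b) \<in> Y" by auto
        from ch[OF XY(1,2)] obtain Z where "Z \<in> C" "(x,a) \<in> Z" "(y,b) \<in> Z" using XY by blast
        then show "(x+y,a+b) \<in> \<Union>C" using CA unfolding A_def hb_good_def by blast
      next
        fix x a c assume "(x,a) \<in> \<Union>C"
        then show "(c *\<^sub>R x, c*a) \<in> \<Union>C" using CA unfolding A_def hb_good_def by blast
      next
        fix x a assume "(x,a) \<in> \<Union>C"
        then show "a \<le> p x" using CA unfolding A_def hb_good_def by blast
      qed
      then show ?thesis by blast
    qed
  qed
  then obtain M where MA: "M \<in> A" and Mmax: "\<And>X. X \<in> A \<Longrightarrow> M \<subseteq> X \<Longrightarrow> X = M" by blast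
  have M0: "(0,0) \<in> M" and Madd: "\<And>x a y b. (x,a)\<in>M \<Longrightarrow> (y,b)\<in>M \<Longrightarrow> (x+y,a+b)\<in>M"
    and Msc: "\<And>x a c. (x,a)\<in>M \<Longrightarrow> (c *\<^sub>R x, c*a)\<in>M" and Mp: "\<And>x a. (x,a)\<in>M \<Longrightarrow> a \<le> p x"
    and MG0: "G0 \<subseteq> M"
    using MA unfolding A_def hb_good_def by blast+
  have total: "\<exists>a. (y,a) \<in> M" for y
  proof (rule ccontr)
    assume ny: "\<nexists>a. (y,a) \<in> M"
    define T where "T = (\<lambda>(m,a). a - p (m - y)) ` M"
    define c where "c = Sup T"
    have bd: "a - p (m - y) \<le> p (m' + y) - b" if "(m,a)\<in>M" "(m',b)\<in>M" for m a m' b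
    proof -
      have "a + b \<le> p (m + m')" using Mp[OF Madd[OF that]] .
      also have "\<dots> \<le> p (m - y) + p (m' + y)" using sub[of "m - y" "m' + y"] by simp
      finally show ?thesis by simp
    qed
    have Tne: "T \<noteq> {}" using M0 unfolding T_def by blast
    have Tbdd: "bdd_above T" unfolding T_def bdd_above_def
      using bd[OF _ M0] by (intro exI[of _ "p y"]) (auto simp: case_prod_beta)
    have c1: "a - p (m - y) \<le> c" if "(m,a) \<in> M" for m a
      unfolding c_def by (rule cSup_upper[OF _ Tbdd]) (use that in \<open>force simp: T_def\<close>)
    have c2: "c \<le> p (m + y) - b" if "(m,b) \<in> M" for m b
      unfolding c_def by (rule cSup_least[OF Tne]) (use bd that in \<open>auto simp: T_def\<close>)
    define M' where "M' = {(m + t *\<^sub>R y, a + t * c) | m a t. (m,a) \<in> M}"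
    have MM': "M \<subseteq> M'" unfolding M'_def by force
    have "M' \<in> A" unfolding A_def hb_good_def
    proof (intro CollectI conjI allI impI)
      show "(0,0) \<in> M'" using MM' M0 by blast
      show "G0 \<subseteq> M'" using MM' MG0 by blast
    next
      fix x a x' a' assume "(x,a) \<in> M'" "(x',a') \<in> M'"
      then obtain m b t m' b' t' where h: "(m,b)\<in>M" "x = m + t *\<^sub>R y" "a = b + t*c"
        "(m',b')\<in>M" "x' = m' + t' *\<^sub>R y" "a' = b' + t'*c" unfolding M'_def by blast
      have "x + x' = (m + m') + (t + t') *\<^sub>R y" "a + a' = (b + b') + (t+t') * c"
        using h by (simp_all add: algebra_simps)
      then show "(x + x', a + a') \<in> M'" unfolding M'_def using Madd[OF h(1) h(4)] by blast
    next
      fix x a r assume "(x,a) \<in> M'"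
      then obtain m b t where h: "(m,b)\<in>M" "x = m + t *\<^sub>R y" "a = b + t*c" unfolding M'_def by blast
      have "r *\<^sub>R x = r *\<^sub>R m + (r*t) *\<^sub>R y" "r * a = r * b + (r*t) * c"
        using h by (simp_all add: algebra_simps)
      then show "(r *\<^sub>R x, r * a) \<in> M'" unfolding M'_def using Msc[OF h(1)] by blast
    next
      fix x a assume "(x,a) \<in> M'"
      then obtain m b t where h: "(m,b)\<in>M" "x = m + t *\<^sub>R y" "a = b + t*c" unfolding M'_def by blast
      show "a \<le> p x"
      proof (cases t "0::real" rule: linorder_cases)
        case equal then show ?thesis using h Mp by simp
      next
        case greater
        have "c \<le> p ((1/t) *\<^sub>R m + y) - (1/t) * b" using c2[OF Msc[OF h(1)]] .
        hence "t * c \<le> t * p ((1/t) *\<^sub>R m + y) - b" using greater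
          by (simp add: algebra_simps mult_left_mono[of c _ t] divide_simps)
        also have "t * p ((1/t) *\<^sub>R m + y) = p (t *\<^sub>R ((1/t) *\<^sub>R m + y))" using hom greater by simp
        also have "t *\<^sub>R ((1/t) *\<^sub>R m + y) = x" using greater h by (simp add: scaleR_add_right)
        finally show ?thesis using h by simp
      next
        case less
        define s where "s = - t"
        have s: "s > 0" using less s_def by simp
        have "(1/s) * b - p ((1/s) *\<^sub>R m - y) \<le> c" using c1[OF Msc[OF h(1)]] .
        hence "b - s * p ((1/s) *\<^sub>R m - y) \<le> s * c" using s
          by (simp add: algebra_simps divide_simps)
        also have "s * p ((1/s) *\<^sub>R m - y) = p (s *\<^sub>R ((1/s) *\<^sub>R m - y))" using hom s by simp
        also have "s *\<^sub>R ((1/s) *\<^sub>R m - y) = x" using s h s_def by (simp add: scaleR_diff_right)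
        finally show ?thesis using h s_def by simp
      qed
    qed
    with Mmax MM' have "M' = M" by blast
    moreover have "(y, c) \<in> M'" unfolding M'_def using M0 by force
    ultimately show False using ny by blast
  qed
  have uniq: "a = b" if "(x,a) \<in> M" "(x,b) \<in> M" for x a b
  proof -
    have "(0, a - b) \<in> M" using Madd[OF that(1) Msc[OF that(2), of "-1"]] by simp
    moreover have "(0, b - a) \<in> M" using Madd[OF that(2) Msc[OF that(1), of "-1"]] by simp
    ultimately have "a - b \<le> 0" "b - a \<le> 0" using Mp p0 by (metis)+
    then show ?thesis by simp
  qed
  define f where "f x = (SOME a. (x,a) \<in> M)" for x
  have fM: "(x, f x) \<in> M" for x unfolding f_def using total by (metis someI_ex)
  have fe: "(x,a) \<in> M \<Longrightarrow> f x = a" for x a using uniq fM by blast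
  have "linear f"
    by (rule linearI) (use fe fM Madd Msc in \<open>auto\<close>)
  moreover have "\<forall>x. f x \<le> p x" using fM Mp by blast
  moreover have "f v = p v" using fe MG0 unfolding G0_def by (metis (no_types, lifting) image_eqI mult_1 rangeI scaleR_one subset_iff)
  ultimately show ?thesis by blast
qed

abbreviation "cF u \<equiv> at (u, 0::real) within (UNIV \<times> {0<..})"

lemma cF_nontriv: "cF (u::'a::real_normed_vector) \<noteq> bot"
proof -
  have "(u, 0::real) islimpt (UNIV \<times> {0<..})"
    unfolding islimpt_approachable
  proof (intro allI impI)
    fix e :: real assume e: "e > 0"
    show "\<exists>x'\<in>UNIV \<times> {0::real<..}. x' \<noteq> (u, 0) \<and> dist x' (u, 0) < e"
    proof -
      have "dist (u, e/2) (u, 0) = e/2" using e by (simp add: dist_Pair_Pair dist_real_def)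
      moreover have "(u, e/2) \<in> UNIV \<times> {0<..}" using e by auto
      moreover have "(u, e / 2) \<noteq> (u, 0)" using e by auto
      moreover have "e/2 < e" using e by simp
      ultimately show ?thesis by (metis (no_types, lifting))
    qed
  qed
  then show ?thesis using trivial_limit_within by blast
qed

lemma cdd_upper:
  assumes "d > 0" "\<And>x t. dist x u < d \<Longrightarrow> 0 < t \<Longrightarrow> t < d \<Longrightarrow> (\<phi> (x + t *\<^sub>R w) - \<phi> x) / t \<le> c"
  shows "clarke_dd \<phi> u w \<le> ereal c"
  unfolding clarke_dd_def
proof (rule Limsup_bounded, unfold eventually_at, intro exI[of _ d] conjI ballI impI)
  fix z :: "'a \<times> real" assume z: "z \<in> UNIV \<times> {0<..}" "z \<noteq> (u, 0) \<and> dist z (u, 0) < d"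
  obtain x t where zxt: "z = (x,t)" by (cases z)
  have "dist x u < d" using dist_fst_le[of z "(u,0)"] z zxt by simp
  moreover have "t < d" using dist_snd_le[of z "(u,0)"] z zxt by (simp add: dist_real_def)
  ultimately show "(case z of (x, t) \<Rightarrow> ereal ((\<phi> (x + t *\<^sub>R w) - \<phi> x) / t)) \<le> ereal c"
    using assms z zxt by auto
qed (use assms in auto)

lemma cdd_lower:
  assumes "d > 0" "\<And>x t. dist x u < d \<Longrightarrow> 0 < t \<Longrightarrow> t < d \<Longrightarrow> c \<le> (\<phi> (x + t *\<^sub>R w) - \<phi> x) / t"
  shows "ereal c \<le> clarke_dd \<phi> u w"
  unfolding clarke_dd_def
proof (rule le_Limsup[OF cF_nontriv], unfold eventually_at, intro exI[of _ d] conjI ballI impI)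
  fix z :: "'a \<times> real" assume z: "z \<in> UNIV \<times> {0<..}" "z \<noteq> (u, 0) \<and> dist z (u, 0) < d"
  obtain x t where zxt: "z = (x,t)" by (cases z)
  have "dist x u < d" using dist_fst_le[of z "(u,0)"] z zxt by simp
  moreover have "t < d" using dist_snd_le[of z "(u,0)"] z zxt by (simp add: dist_real_def)
  ultimately show "ereal c \<le> (case z of (x, t) \<Rightarrow> ereal ((\<phi> (x + t *\<^sub>R w) - \<phi> x) / t))"
    using assms z zxt by auto
qed (use assms in auto)

lemma cdd_less:
  assumes "clarke_dd \<phi> u w < ereal c"
  shows "\<exists>d>0. \<forall>x t. dist x u < d \<longrightarrow> 0 < t \<longrightarrow> t < d \<longrightarrow> (\<phi> (x + t *\<^sub>R w) - \<phi> x) / t < c"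
proof -
  have "eventually (\<lambda>z. (case z of (x, t) \<Rightarrow> ereal ((\<phi> (x + t *\<^sub>R w) - \<phi> x) / t)) < ereal c) (cF u)"
    using Limsup_lessD[OF assms[unfolded clarke_dd_def]] .
  then obtain d where d: "d > 0" and P: "\<And>z. z \<in> UNIV \<times> {0<..} \<Longrightarrow> z \<noteq> (u,0) \<Longrightarrow> dist z (u,0) < d \<Longrightarrow>
      (case z of (x, t) \<Rightarrow> ereal ((\<phi> (x + t *\<^sub>R w) - \<phi> x) / t)) < ereal c"
    unfolding eventually_at by blast
  show ?thesis
  proof (intro exI[of _ "d/2"] conjI allI impI)
    fix x t assume h: "dist x u < d/2" "0 < t" "t < d/2"
    have "dist (x,t) (u,0) \<le> dist x u + dist t 0"
      unfolding dist_Pair_Pair by (rule sqrt_sum_squares_le_sum) auto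
    also have "\<dots> < d" using h by (simp add: dist_real_def)
    finally have "dist (x,t) (u,0) < d" .
    then show "(\<phi> (x + t *\<^sub>R w) - \<phi> x) / t < c" using P[of "(x,t)"] h by auto
  qed (use d in auto)
qed

definition pdd where "pdd \<phi> u w = real_of_ereal (clarke_dd \<phi> u w)"

context
  fixes \<phi> :: "'a::real_normed_vector \<Rightarrow> real" and u :: 'a and r L :: real
  assumes r: "r > 0" and lip: "\<And>x y. x \<in> ball u r \<Longrightarrow> y \<in> ball u r \<Longrightarrow> \<bar>\<phi> x - \<phi> y\<bar> \<le> L * dist x y"
begin

lemma quot_bound:
  "\<exists>d>0. \<forall>x t. dist x u < d \<longrightarrow> 0 < t \<longrightarrow> t < d \<longrightarrow> \<bar>(\<phi> (x + t *\<^sub>R w) - \<phi> x) / t\<bar> \<le> L * norm w"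
proof (intro exI[of _ "min (r/2) (r / (2 * (norm w + 1)))"] conjI allI impI)
  show "0 < min (r/2) (r / (2 * (norm w + 1)))" using r by (smt (verit) divide_pos_pos norm_ge_zero)
  fix x t assume h: "dist x u < min (r/2) (r / (2 * (norm w + 1)))" "0 < t" "t < min (r/2) (r / (2 * (norm w + 1)))"
  have "t * norm w \<le> t * (norm w + 1)" using h by simp
  also have "\<dots> < r / 2" using h(3) by (simp add: field_simps add_pos_nonneg)
  finally have tw: "t * norm w < r/2" .
  have x: "x \<in> ball u r" using h by (simp add: dist_commute)
  have "dist u (x + t *\<^sub>R w) \<le> dist u x + dist x (x + t *\<^sub>R w)" by (rule dist_triangle)
  also have "dist x (x + t *\<^sub>R w) = t * norm w" using h by (simp add: dist_norm)
  finally have xb: "x + t *\<^sub>R w \<in> ball u r" using tw h by (simp add: dist_commute)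
  have "dist (x + t *\<^sub>R w) x = t * norm w" using h by (simp add: dist_norm)
  then have "\<bar>\<phi> (x + t *\<^sub>R w) - \<phi> x\<bar> \<le> L * (t * norm w)"
    using lip[OF xb x] by simp
  then show "\<bar>(\<phi> (x + t *\<^sub>R w) - \<phi> x) / t\<bar> \<le> L * norm w"
    using h(2) by (simp add: abs_div divide_le_eq mult_ac)
qed

lemma cdd_finite: "clarke_dd \<phi> u w = ereal (pdd \<phi> u w)" and pdd_bound: "\<bar>pdd \<phi> u w\<bar> \<le> L * norm w"
proof -
  obtain d where d: "d > 0" and b: "\<And>x t. dist x u < d \<Longrightarrow> 0 < t \<Longrightarrow> t < d \<Longrightarrow> \<bar>(\<phi> (x + t *\<^sub>R w) - \<phi> x) / t\<bar> \<le> L * norm w"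
    using quot_bound by blast
  have up: "clarke_dd \<phi> u w \<le> ereal (L * norm w)"
    by (rule cdd_upper[OF d]) (metis abs_le_D1 b)
  have lo: "ereal (- (L * norm w)) \<le> clarke_dd \<phi> u w"
    by (rule cdd_lower[OF d]) (metis abs_le_D2 b minus_le_iff)
  from up lo show "clarke_dd \<phi> u w = ereal (pdd \<phi> u w)" unfolding pdd_def by (cases "clarke_dd \<phi> u w") auto
  from up lo show "\<bar>pdd \<phi> u w\<bar> \<le> L * norm w" unfolding pdd_def by (cases "clarke_dd \<phi> u w") auto
qed

lemma pdd_upper:
  assumes "d > 0" "\<And>x t. dist x u < d \<Longrightarrow> 0 < t \<Longrightarrow> t < d \<Longrightarrow> (\<phi> (x + t *\<^sub>R w) - \<phi> x) / t \<le> c"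
  shows "pdd \<phi> u w \<le> c"
  using cdd_upper[where u=u and \<phi>=\<phi>, OF assms] cdd_finite[of w] by simp

lemma pdd_lower:
  assumes "d > 0" "\<And>x t. dist x u < d \<Longrightarrow> 0 < t \<Longrightarrow> t < d \<Longrightarrow> c \<le> (\<phi> (x + t *\<^sub>R w) - \<phi> x) / t"
  shows "c \<le> pdd \<phi> u w"
  using cdd_lower[where u=u and \<phi>=\<phi>, OF assms] cdd_finite[of w] by simp

lemma pdd_less:
  assumes "pdd \<phi> u w < c"
  shows "\<exists>d>0. \<forall>x t. dist x u < d \<longrightarrow> 0 < t \<longrightarrow> t < d \<longrightarrow> (\<phi> (x + t *\<^sub>R w) - \<phi> x) / t < c"
  using cdd_less[of \<phi> u w c] assms cdd_finite[of w] by simp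

lemma pdd_zero: "pdd \<phi> u 0 = 0"
  by (rule antisym; (rule pdd_upper[of 1] | rule pdd_lower[of 1])) auto

lemma pdd_hom_le: assumes c: "c > 0" shows "pdd \<phi> u (c *\<^sub>R w) \<le> c * pdd \<phi> u w"
proof (rule field_le_epsilon)
  fix e :: real assume e: "e > 0"
  obtain d where d: "d > 0" and P: "\<And>x t. dist x u < d \<Longrightarrow> 0 < t \<Longrightarrow> t < d \<Longrightarrow> (\<phi> (x + t *\<^sub>R w) - \<phi> x) / t < pdd \<phi> u w + e / c"
    using pdd_less[of w "pdd \<phi> u w + e / c"] e c by auto
  show "pdd \<phi> u (c *\<^sub>R w) \<le> c * pdd \<phi> u w + e"
  proof (rule pdd_upper[of "min d (d / c)"])
    show "0 < min d (d / c)" using d c by simp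
    fix x t assume h: "dist x u < min d (d / c)" "0 < t" "t < min d (d / c)"
    have tc: "t * c < d" using h c by (simp add: field_simps)
    have "(\<phi> (x + (t*c) *\<^sub>R w) - \<phi> x) / (t*c) < pdd \<phi> u w + e / c"
      using P[of x "t*c"] h tc c by simp
    then have "c * ((\<phi> (x + (t*c) *\<^sub>R w) - \<phi> x) / (t*c)) < c * (pdd \<phi> u w + e / c)"
      by (metis mult_strict_left_mono c)
    moreover have "c * ((\<phi> (x + (t*c) *\<^sub>R w) - \<phi> x) / (t*c)) = (\<phi> (x + t *\<^sub>R c *\<^sub>R w) - \<phi> x) / t"
      using c h by (simp add: mult.commute)
    moreover have "c * (pdd \<phi> u w + e / c) = c * pdd \<phi> u w + e" using c by (simp add: field_simps)
    ultimately show "(\<phi> (x + t *\<^sub>R c *\<^sub>R w) - \<phi> x) / t \<le> c * pdd \<phi> u w + e"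
      by simp
  qed
qed

lemma pdd_hom: assumes c: "c \<ge> 0" shows "pdd \<phi> u (c *\<^sub>R w) = c * pdd \<phi> u w"
proof (cases "c = 0")
  case True then show ?thesis using pdd_zero by simp
next
  case False
  then have c: "c > 0" using c by simp
  have "pdd \<phi> u w = pdd \<phi> u ((1/c) *\<^sub>R (c *\<^sub>R w))" using c by simp
  also have "\<dots> \<le> (1/c) * pdd \<phi> u (c *\<^sub>R w)" by (rule pdd_hom_le) (use c in simp)
  finally have "c * pdd \<phi> u w \<le> pdd \<phi> u (c *\<^sub>R w)" using c by (simp add: field_simps)
  with pdd_hom_le[OF c, of w] show ?thesis by simp
qed

lemma pdd_sub: "pdd \<phi> u (w1 + w2) \<le> pdd \<phi> u w1 + pdd \<phi> u w2"
proof (rule field_le_epsilon)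
  fix e :: real assume e: "e > 0"
  obtain d1 where d1: "d1 > 0" and P1: "\<And>x t. dist x u < d1 \<Longrightarrow> 0 < t \<Longrightarrow> t < d1 \<Longrightarrow> (\<phi> (x + t *\<^sub>R w1) - \<phi> x) / t < pdd \<phi> u w1 + e / 2"
    using pdd_less[of w1 "pdd \<phi> u w1 + e / 2"] e by auto
  obtain d2 where d2: "d2 > 0" and P2: "\<And>x t. dist x u < d2 \<Longrightarrow> 0 < t \<Longrightarrow> t < d2 \<Longrightarrow> (\<phi> (x + t *\<^sub>R w2) - \<phi> x) / t < pdd \<phi> u w2 + e / 2"
    using pdd_less[of w2 "pdd \<phi> u w2 + e / 2"] e by auto
  define d where "d = min d1 (min (d2/2) (d2 / (2 * (norm w1 + 1))))"
  have "2 * (norm w1 + 1) > 0" by (smt (verit) norm_ge_zero)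
  then have d: "d > 0" unfolding d_def using d1 d2 by (simp del: mult_2 distrib_left)
  show "pdd \<phi> u (w1 + w2) \<le> pdd \<phi> u w1 + pdd \<phi> u w2 + e"
  proof (rule pdd_upper[OF d])
    fix x t assume h: "dist x u < d" "0 < t" "t < d"
    have "t * norm w1 \<le> t * (norm w1 + 1)" using h by simp
    also have "\<dots> < d2 / 2" using h(3) unfolding d_def by (simp add: field_simps add_pos_nonneg)
    finally have tw: "t * norm w1 < d2/2" .
    have "dist (x + t *\<^sub>R w1) u \<le> dist (x + t *\<^sub>R w1) x + dist x u" by (rule dist_triangle)
    also have "dist (x + t *\<^sub>R w1) x = t * norm w1" using h by (simp add: dist_norm)
    finally have x1: "dist (x + t *\<^sub>R w1) u < d2" using tw h unfolding d_def by simp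
    have a: "(\<phi> (x + t *\<^sub>R w1) - \<phi> x) / t < pdd \<phi> u w1 + e / 2"
      using P1 h unfolding d_def by simp
    have b: "(\<phi> ((x + t *\<^sub>R w1) + t *\<^sub>R w2) - \<phi> (x + t *\<^sub>R w1)) / t < pdd \<phi> u w2 + e / 2"
      using P2[OF x1] h unfolding d_def by simp
    have eq: "(\<phi> (x + t *\<^sub>R (w1 + w2)) - \<phi> x) / t =
        (\<phi> ((x + t *\<^sub>R w1) + t *\<^sub>R w2) - \<phi> (x + t *\<^sub>R w1)) / t + (\<phi> (x + t *\<^sub>R w1) - \<phi> x) / t"
      by (simp add: scaleR_add_right add.assoc diff_divide_distrib)
    show "(\<phi> (x + t *\<^sub>R (w1 + w2)) - \<phi> x) / t \<le> pdd \<phi> u w1 + pdd \<phi> u w2 + e"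
      using a b eq by linarith
  qed
qed

end

lemma ll_isCont:
  assumes "locally_lipschitz \<phi>" shows "isCont \<phi> x"
proof -
  obtain r L where r: "r > 0" and lip: "\<forall>y\<in>ball x r. \<forall>z\<in>ball x r. \<bar>\<phi> y - \<phi> z\<bar> \<le> L * dist y z"
    using assms unfolding locally_lipschitz_def by blast
  show ?thesis unfolding continuous_at_eps_delta
  proof (intro allI impI)
    fix e :: real assume e: "e > 0"
    show "\<exists>d>0. \<forall>x'. dist x' x < d \<longrightarrow> dist (\<phi> x') (\<phi> x) < e"
    proof (intro exI[of _ "min r (e / (\<bar>L\<bar> + 1))"] conjI allI impI)
      have "\<bar>L\<bar> + 1 > 0" by simp
      then show "0 < min r (e / (\<bar>L\<bar> + 1))" using r e by simp
      fix y assume y: "dist y x < min r (e / (\<bar>L\<bar> + 1))"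
      have yb: "y \<in> ball x r" using y by (simp add: dist_commute)
      have xb: "x \<in> ball x r" using r by simp
      have "\<bar>\<phi> y - \<phi> x\<bar> \<le> L * dist y x" using lip yb xb by blast
      also have "\<dots> \<le> \<bar>L\<bar> * dist y x" by (simp add: mult_right_mono)
      also have "\<dots> \<le> (\<bar>L\<bar> + 1) * dist y x" by (simp add: mult_right_mono)
      also have "\<dots> < (\<bar>L\<bar> + 1) * (e / (\<bar>L\<bar> + 1))"
        using y by (intro mult_strict_left_mono) auto
      also have "\<dots> = e" by simp
      finally show "dist (\<phi> y) (\<phi> x) < e" by (simp add: dist_real_def)
    qed
  qed
qed

lemma key_neg:
  fixes \<phi> :: "'a::real_normed_vector \<Rightarrow> real"
  assumes ll: "locally_lipschitz \<phi>"
    and hyp: "\<forall>v'\<in>clarke_subdiff \<phi> v. blinfun_apply v' v < 0"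
  shows "\<exists>d>0. \<forall>x t. dist x v < d \<longrightarrow> 0 < t \<longrightarrow> t < d \<longrightarrow> \<phi> (x + t *\<^sub>R v) < \<phi> x"
proof -
  obtain r L where r: "r > 0" and lip0: "\<forall>y\<in>ball v r. \<forall>z\<in>ball v r. \<bar>\<phi> y - \<phi> z\<bar> \<le> L * dist y z"
    using ll unfolding locally_lipschitz_def by blast
  have lip: "\<And>x y. x \<in> ball v r \<Longrightarrow> y \<in> ball v r \<Longrightarrow> \<bar>\<phi> x - \<phi> y\<bar> \<le> L * dist x y" using lip0 by blast
  have neg: "pdd \<phi> v v < 0"
  proof (rule ccontr)
    assume nn: "\<not> pdd \<phi> v v < 0"
    obtain f where f: "linear f" "\<forall>x. f x \<le> pdd \<phi> v x" "f v = pdd \<phi> v v"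
      using hb_exists[of "pdd \<phi> v" v] pdd_sub[OF r lip] pdd_hom[OF r lip] by blast
    have fb: "norm (f x) \<le> norm x * L" for x
    proof -
      have "f x \<le> pdd \<phi> v x" using f(2) by blast
      moreover have "pdd \<phi> v x \<le> L * norm x" using abs_le_D1[OF pdd_bound[OF r lip, where w=x]] .
      ultimately have 1: "f x \<le> L * norm x" by linarith
      have "f (-x) \<le> pdd \<phi> v (-x)" using f(2) by blast
      moreover have "pdd \<phi> v (-x) \<le> L * norm x" using abs_le_D1[OF pdd_bound[OF r lip, where w="-x"]] by simp
      moreover have "f (-x) = - f x" using linear_neg[OF f(1)] .
      ultimately have "- f x \<le> L * norm x" by linarith
      with 1 show ?thesis by (simp add: abs_le_iff mult.commute)
    qed
    have bl: "bounded_linear f"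
      by (rule bounded_linear_intro[OF _ _ fb]) (use f(1) in \<open>auto simp: linear_add linear_scale\<close>)
    have "Blinfun f \<in> clarke_subdiff \<phi> v"
      unfolding clarke_subdiff_def using f(2) cdd_finite[OF r lip] bounded_linear_Blinfun_apply[OF bl]
      by simp
    with hyp have "f v < 0" using bounded_linear_Blinfun_apply[OF bl] by auto
    with f(3) nn show False by simp
  qed
  obtain d where d: "d > 0" and P: "\<And>x t. dist x v < d \<Longrightarrow> 0 < t \<Longrightarrow> t < d \<Longrightarrow> (\<phi> (x + t *\<^sub>R v) - \<phi> x) / t < 0"
    using pdd_less[OF r lip neg] by blast
  show ?thesis
  proof (intro exI[of _ d] conjI allI impI)
    fix x t assume h: "dist x v < d" "0 < t" "t < d"
    from P[OF h] h(2) show "\<phi> (x + t *\<^sub>R v) < \<phi> x" by (simp add: divide_less_0_iff)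
  qed (use d in auto)
qed

lemma local_cross:
  fixes \<phi> :: "'a::real_normed_vector \<Rightarrow> real"
  assumes ll: "locally_lipschitz \<phi>"
    and hyp: "\<forall>v. \<phi> v = \<mu> \<longrightarrow> (\<forall>v'\<in>clarke_subdiff \<phi> v. blinfun_apply v' v < 0)"
    and u: "norm u = 1" and s: "s > 0" and eq: "\<phi> (s *\<^sub>R u) = \<mu>"
  shows "\<exists>\<eta>>0. \<forall>t. (s - \<eta> < t \<and> t < s \<longrightarrow> \<phi> (t *\<^sub>R u) > \<mu>) \<and> (s < t \<and> t < s + \<eta> \<longrightarrow> \<phi> (t *\<^sub>R u) < \<mu>)"
proof -
  obtain d where d: "d > 0" and P: "\<And>x t. dist x (s *\<^sub>R u) < d \<Longrightarrow> 0 < t \<Longrightarrow> t < d \<Longrightarrow> \<phi> (x + t *\<^sub>R (s *\<^sub>R u)) < \<phi> x"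
    using key_neg[OF ll, of "s *\<^sub>R u"] hyp eq by blast
  show ?thesis
  proof (intro exI[of _ "min d (s * d)"] conjI allI impI)
    show "0 < min d (s * d)" using d s by simp
    fix t
    assume h: "s - min d (s * d) < t \<and> t < s"
    have "dist (t *\<^sub>R u) (s *\<^sub>R u) = s - t" using h u
      by (simp add: dist_norm flip: scaleR_diff_left)
    then have "dist (t *\<^sub>R u) (s *\<^sub>R u) < d" using h min.cobounded1[of d "s*d"] by linarith
    moreover have "s - t < s * d" using h min.cobounded2[of d "s*d"] by linarith
    then have "(s - t) / s < d" using s by (simp add: divide_less_eq mult.commute)
    moreover have "0 < (s - t) / s" using h s by simp
    ultimately have "\<phi> (t *\<^sub>R u + ((s - t) / s) *\<^sub>R (s *\<^sub>R u)) < \<phi> (t *\<^sub>R u)" using P by blast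
    moreover have "((s - t) / s) *\<^sub>R (s *\<^sub>R u) = (s - t) *\<^sub>R u" using s by simp
    then have "t *\<^sub>R u + ((s - t) / s) *\<^sub>R (s *\<^sub>R u) = s *\<^sub>R u" by (simp add: scaleR_diff_left)
    ultimately show "\<phi> (t *\<^sub>R u) > \<mu>" using eq by simp
  next
    fix t
    assume h: "s < t \<and> t < s + min d (s * d)"
    have "t - s < s * d" using h min.cobounded2[of d "s*d"] by linarith
    then have "(t - s) / s < d" using s by (simp add: divide_less_eq mult.commute)
    moreover have "0 < (t - s) / s" using h s by simp
    ultimately have "\<phi> (s *\<^sub>R u + ((t - s) / s) *\<^sub>R (s *\<^sub>R u)) < \<phi> (s *\<^sub>R u)"
      using P[of "s *\<^sub>R u" "(t - s) / s"] d by (simp only: dist_self)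
    moreover have "((t - s) / s) *\<^sub>R (s *\<^sub>R u) = (t - s) *\<^sub>R u" using s by simp
    then have "s *\<^sub>R u + ((t - s) / s) *\<^sub>R (s *\<^sub>R u) = t *\<^sub>R u" by (simp add: scaleR_diff_left)
    ultimately show "\<phi> (t *\<^sub>R u) < \<mu>" using eq by simp
  qed
qed

lemma one_dim:
  fixes g :: "real \<Rightarrow> real"
  assumes cont: "\<And>t. isCont g t" and g1: "g 1 > \<mu>" and T: "T \<ge> 1" "g T < \<mu>"
    and cross: "\<And>s. s \<ge> 1 \<Longrightarrow> g s = \<mu> \<Longrightarrow> \<exists>\<eta>>0. \<forall>t. (s - \<eta> < t \<and> t < s \<longrightarrow> g t > \<mu>) \<and> (s < t \<and> t < s + \<eta> \<longrightarrow> g t < \<mu>)"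
  shows "\<exists>\<tau>>1. \<forall>t\<ge>1. (t < \<tau> \<longrightarrow> g t > \<mu>) \<and> (t = \<tau> \<longrightarrow> g t = \<mu>) \<and> (t > \<tau> \<longrightarrow> g t < \<mu>)"
proof -
  have contUNIV: "continuous_on UNIV g" using cont by (simp add: continuous_at_imp_continuous_on)
  have ivt: "\<exists>x. a \<le> x \<and> x \<le> b \<and> g x = \<mu>" if "a \<le> b" "g b \<le> \<mu>" "\<mu> \<le> g a" for a b
    using IVT2[of g b \<mu> a] that cont by blast
  have ivt': "\<exists>x. a \<le> x \<and> x \<le> b \<and> g x = \<mu>" if "a \<le> b" "g a \<le> \<mu>" "\<mu> \<le> g b" for a b
    using IVT[of g a \<mu> b] that cont by blast
  have clW: "closed ({a..b} \<inter> {t. g t = \<mu>})" for a b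
    by (intro closed_Int closed_atLeastAtMost closed_Collect_eq contUNIV continuous_on_const)
  define Z where "Z = {1..T} \<inter> {t. g t = \<mu>}"
  have Zne: "Z \<noteq> {}" using ivt[of 1 T] T g1 unfolding Z_def by force
  have Zbdd: "bdd_below Z" unfolding Z_def by (rule bdd_belowI[of _ 1]) auto
  define \<tau> where "\<tau> = Inf Z"
  have tZ: "\<tau> \<in> Z" unfolding \<tau>_def using closed_contains_Inf[OF Zne Zbdd] clW Z_def by blast
  then have gt: "g \<tau> = \<mu>" and t1: "\<tau> \<ge> 1" "\<tau> \<le> T" unfolding Z_def by auto
  have t1': "\<tau> > 1" using t1 gt g1 by (cases "\<tau> = 1") auto
  have below: "g t > \<mu>" if th: "1 \<le> t" "t < \<tau>" for t
  proof (rule ccontr)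
    assume "\<not> g t > \<mu>"
    then have "g t \<le> \<mu>" "\<mu> \<le> g 1" using g1 by auto
    then obtain x where x: "1 \<le> x" "x \<le> t" "g x = \<mu>" using ivt[of 1 t] th by blast
    then have "x \<in> Z" using that t1 unfolding Z_def by auto
    then have "\<tau> \<le> x" unfolding \<tau>_def by (rule cInf_lower[OF _ Zbdd])
    with x that show False by simp
  qed
  have above: "g t < \<mu>" if "t > \<tau>" for t
  proof (rule ccontr)
    assume nt: "\<not> g t < \<mu>"
    obtain \<eta> where \<eta>: "\<eta> > 0" and C: "\<And>t. (\<tau> - \<eta> < t \<and> t < \<tau> \<longrightarrow> g t > \<mu>) \<and> (\<tau> < t \<and> t < \<tau> + \<eta> \<longrightarrow> g t < \<mu>)"
      using cross[OF t1(1) gt] by blast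
    define a where "a = \<tau> + \<eta>/2"
    have ga: "g a < \<mu>" using C[of a] \<eta> unfolding a_def by simp
    have at: "a \<le> t" using C[of t] nt that \<eta> unfolding a_def by force
    define W where "W = {a..t} \<inter> {t. g t = \<mu>}"
    have Wne: "W \<noteq> {}" using ivt'[of a t] at ga nt unfolding W_def by force
    have Wbdd: "bdd_below W" unfolding W_def by (rule bdd_belowI[of _ a]) auto
    define s where "s = Inf W"
    have sW: "s \<in> W" unfolding s_def using closed_contains_Inf[OF Wne Wbdd] clW W_def by blast
    then have gs: "g s = \<mu>" and sa: "a \<le> s" "s \<le> t" unfolding W_def by auto
    have sa': "a < s" using sa gs ga by (cases "a = s") auto
    have bl: "g x < \<mu>" if xh: "a \<le> x" "x < s" for x
    proof (rule ccontr)
      assume "\<not> g x < \<mu>"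
      then have "\<mu> \<le> g x" by simp
      then obtain y where y: "a \<le> y" "y \<le> x" "g y = \<mu>" using ivt'[of a x] xh ga by force
      then have "y \<in> W" using xh sa unfolding W_def by auto
      then have "s \<le> y" unfolding s_def by (rule cInf_lower[OF _ Wbdd])
      with y xh show False by simp
    qed
    have s1: "s \<ge> 1" using sa t1 \<eta> unfolding a_def by simp
    obtain \<eta>' where \<eta>': "\<eta>' > 0" and C': "\<And>t. (s - \<eta>' < t \<and> t < s \<longrightarrow> g t > \<mu>)"
      using cross[OF s1 gs] by blast
    define x where "x = max a (s - \<eta>'/2)"
    have "a \<le> x" "x < s" "s - \<eta>' < x" using sa' \<eta>' unfolding x_def by auto
    then show False using bl C' by force
  qed
  show ?thesis
    using t1' below gt above by (intro exI[of _ \<tau>]) auto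
qed

theorem lemma2p5:
  fixes \<phi> :: "'a::banach \<Rightarrow> real" and S :: "'a set" and \<mu> :: real
  assumes "reflexive_space TYPE('a)"
    and "S \<subseteq> sphere 0 1" and "S \<noteq> {}"
    and "locally_lipschitz \<phi>"
    and "ereal \<mu> < (INF u\<in>S. ereal (\<phi> u))"
    and "\<forall>u\<in>S. filterlim (\<lambda>t. \<phi> (t *\<^sub>R u)) at_bot at_top"
    and "\<forall>v. \<phi> v = \<mu> \<longrightarrow> (\<forall>v'\<in>clarke_subdiff \<phi> v. blinfun_apply v' v < 0)"
  shows "\<exists>\<tau> :: 'a \<Rightarrow> real. continuous_on S \<tau> \<and> (\<forall>u\<in>S. \<tau> u > 1) \<and>
           (\<forall>u\<in>S. \<forall>t\<ge>1.
              (t < \<tau> u \<longrightarrow> \<phi> (t *\<^sub>R u) > \<mu>) \<and>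
              (t = \<tau> u \<longrightarrow> \<phi> (t *\<^sub>R u) = \<mu>) \<and>
              (t > \<tau> u \<longrightarrow> \<phi> (t *\<^sub>R u) < \<mu>))"
proof -
  note ll = assms(4) and hyp = assms(7)
  have cont: "isCont \<phi> x" for x using ll_isCont[OF ll] .
  have nrm: "norm u = 1" if "u \<in> S" for u using assms(2) that by auto
  have gt1: "\<phi> u > \<mu>" if "u \<in> S" for u
  proof -
    have "(INF u\<in>S. ereal (\<phi> u)) \<le> ereal (\<phi> u)" using that by (rule INF_lower)
    with assms(5) have "ereal \<mu> < ereal (\<phi> u)" by (rule less_le_trans)
    then show ?thesis by simp
  qed
  have ex: "\<exists>\<tau>>1. \<forall>t\<ge>1. (t < \<tau> \<longrightarrow> \<phi> (t *\<^sub>R u) > \<mu>) \<and> (t = \<tau> \<longrightarrow> \<phi> (t *\<^sub>R u) = \<mu>) \<and> (t > \<tau> \<longrightarrow> \<phi> (t *\<^sub>R u) < \<mu>)"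
    if u: "u \<in> S" for u
  proof -
    have "eventually (\<lambda>t. \<phi> (t *\<^sub>R u) \<le> \<mu> - 1) at_top"
      using assms(6) u unfolding filterlim_at_bot by blast
    then obtain N where N: "\<And>t. t \<ge> N \<Longrightarrow> \<phi> (t *\<^sub>R u) \<le> \<mu> - 1"
      unfolding eventually_at_top_linorder by blast
    show ?thesis
    proof (rule one_dim[where T="max N 1"])
      show "isCont (\<lambda>t. \<phi> (t *\<^sub>R u)) t" for t
        by (rule continuous_at_compose[OF _ cont, unfolded o_def]) (intro continuous_intros)
      show "\<phi> (1 *\<^sub>R u) > \<mu>" using gt1[OF u] by simp
      show "1 \<le> max N 1" by simp
      show "\<phi> (max N 1 *\<^sub>R u) < \<mu>" using N[of "max N 1"] by simp
      fix s :: real assume "1 \<le> s" "\<phi> (s *\<^sub>R u) = \<mu>"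
      then show "\<exists>\<eta>>0. \<forall>t. (s - \<eta> < t \<and> t < s \<longrightarrow> \<phi> (t *\<^sub>R u) > \<mu>) \<and> (s < t \<and> t < s + \<eta> \<longrightarrow> \<phi> (t *\<^sub>R u) < \<mu>)"
        using local_cross[OF ll hyp nrm[OF u]] by simp
    qed
  qed
  define \<tau> where "\<tau> u = (SOME \<tau>. \<tau> > 1 \<and> (\<forall>t\<ge>1. (t < \<tau> \<longrightarrow> \<phi> (t *\<^sub>R u) > \<mu>) \<and> (t = \<tau> \<longrightarrow> \<phi> (t *\<^sub>R u) = \<mu>) \<and> (t > \<tau> \<longrightarrow> \<phi> (t *\<^sub>R u) < \<mu>)))" for u
  have tau: "\<tau> u > 1 \<and> (\<forall>t\<ge>1. (t < \<tau> u \<longrightarrow> \<phi> (t *\<^sub>R u) > \<mu>) \<and> (t = \<tau> u \<longrightarrow> \<phi> (t *\<^sub>R u) = \<mu>) \<and> (t > \<tau> u \<longrightarrow> \<phi> (t *\<^sub>R u) < \<mu>))"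
    if "u \<in> S" for u
    unfolding \<tau>_def using someI_ex[OF ex[OF that]] .
  have pos: "\<exists>d>0. \<forall>y. dist y x < d \<longrightarrow> \<phi> y > \<mu>" if hx: "\<phi> x > \<mu>" for x
  proof -
    obtain d where "d > 0" "\<forall>y. dist y x < d \<longrightarrow> dist (\<phi> y) (\<phi> x) < \<phi> x - \<mu>"
      using cont[of x, unfolded continuous_at_eps_delta, rule_format, of "\<phi> x - \<mu>"] hx by auto
    then show ?thesis by (auto simp: dist_real_def abs_less_iff intro!: exI[of _ d])
  qed
  have neg: "\<exists>d>0. \<forall>y. dist y x < d \<longrightarrow> \<phi> y < \<mu>" if hx: "\<phi> x < \<mu>" for x
  proof -
    obtain d where "d > 0" "\<forall>y. dist y x < d \<longrightarrow> dist (\<phi> y) (\<phi> x) < \<mu> - \<phi> x"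
      using cont[of x, unfolded continuous_at_eps_delta, rule_format, of "\<mu> - \<phi> x"] hx by auto
    then show ?thesis by (auto simp: dist_real_def abs_less_iff intro!: exI[of _ d])
  qed
  have "continuous_on S \<tau>"
    unfolding continuous_on_iff
  proof (intro ballI allI impI)
    fix u0 e assume u0: "u0 \<in> S" and e: "(0::real) < e"
    define e' where "e' = min (e/2) ((\<tau> u0 - 1)/2)"
    have e': "e' > 0" "e' < e" using e tau[OF u0] unfolding e'_def by auto
    define a where "a = \<tau> u0 - e'"
    define b where "b = \<tau> u0 + e'"
    have "e' \<le> (\<tau> u0 - 1)/2" unfolding e'_def by (rule min.cobounded2)
    then have a1: "a \<ge> 1" "a > 0" using tau[OF u0] unfolding a_def by auto
    have b1: "b \<ge> 1" "b > 0" using tau[OF u0] e' unfolding b_def by auto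
    have "\<phi> (a *\<^sub>R u0) > \<mu>" using tau[OF u0] a1 e' unfolding a_def by auto
    then obtain d1 where d1: "d1 > 0" "\<And>y. dist y (a *\<^sub>R u0) < d1 \<Longrightarrow> \<phi> y > \<mu>" using pos by blast
    have "\<phi> (b *\<^sub>R u0) < \<mu>" using tau[OF u0] b1 e' unfolding b_def by auto
    then obtain d2 where d2: "d2 > 0" "\<And>y. dist y (b *\<^sub>R u0) < d2 \<Longrightarrow> \<phi> y < \<mu>" using neg by blast
    show "\<exists>d>0. \<forall>u\<in>S. dist u u0 < d \<longrightarrow> dist (\<tau> u) (\<tau> u0) < e"
    proof (intro exI[of _ "min (d1/a) (d2/b)"] conjI ballI impI)
      show "0 < min (d1/a) (d2/b)" using d1 d2 a1 b1 by simp
      fix u assume u: "u \<in> S" and du: "dist u u0 < min (d1/a) (d2/b)"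
      have "dist (a *\<^sub>R u) (a *\<^sub>R u0) = a * dist u u0" using a1
        by (simp add: dist_norm flip: scaleR_diff_right)
      also have "\<dots> < d1" using du a1 by (simp add: field_simps)
      finally have "\<phi> (a *\<^sub>R u) > \<mu>" using d1 by blast
      then have "a < \<tau> u"
      proof -
        assume ga: "\<phi> (a *\<^sub>R u) > \<mu>"
        have T: "(a = \<tau> u \<longrightarrow> \<phi> (a *\<^sub>R u) = \<mu>) \<and> (\<tau> u < a \<longrightarrow> \<phi> (a *\<^sub>R u) < \<mu>)"
          using tau[OF u] a1 by blast
        show ?thesis using T ga by (cases "a = \<tau> u"; cases "\<tau> u < a") auto
      qed
      have "dist (b *\<^sub>R u) (b *\<^sub>R u0) = b * dist u u0" using b1
        by (simp add: dist_norm flip: scaleR_diff_right)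
      also have "\<dots> < d2" using du b1 by (simp add: field_simps)
      finally have "\<phi> (b *\<^sub>R u) < \<mu>" using d2 by blast
      then have "\<tau> u < b"
      proof -
        assume gb: "\<phi> (b *\<^sub>R u) < \<mu>"
        have T: "(b < \<tau> u \<longrightarrow> \<phi> (b *\<^sub>R u) > \<mu>) \<and> (b = \<tau> u \<longrightarrow> \<phi> (b *\<^sub>R u) = \<mu>)"
          using tau[OF u] b1 by blast
        show ?thesis using T gb by (cases "b = \<tau> u"; cases "b < \<tau> u") auto
      qed
      show "dist (\<tau> u) (\<tau> u0) < e" using \<open>a < \<tau> u\<close> \<open>\<tau> u < b\<close> e' unfolding a_def b_def dist_real_def by auto
    qed
  qed
  then show ?thesis using tau by (intro exI[of _ \<tau>]) auto
qed

end
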